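(* Let $\sigma\ge 2$, $k\ge 1$, let $U$ be any rotation of a $\sigma$-ary de Bruijn cycle of order $k$, and let $w_{\mathrm{lin}}=U\,U[0..k-2]$. Then the number $r$ of runs of $\operatorname{BWT}(w_{\mathrm{lin}}\$)$ satisfies $r\ge \sigma^{k-1}(\sigma-1)+1$.
   Context: A $\sigma$-ary de Bruijn cycle of order $k$ is a cyclic word of length $\sigma^k$ over an ordered alphabet $\Sigma$ of size $\sigma$ in which every word of $\Sigma^k$ occurs exactly once as a cyclic length-$k$ window. Strings are $0$-indexed. $\$\notin\Sigma$ is an end-marker smaller than all letters, appended once. $\operatorname{BWT}(v)$ is the last column of the matrix whose rows are the cyclic rotations of $v$ sorted lexicographically; a run is a maximal block of one repeated symbol. *)

theory Defs
  imports Main "HOL-Library.List_Lexorder" "HOL-Library.Option_ord"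
begin

definition cyc_window :: "'a list \<Rightarrow> nat \<Rightarrow> nat \<Rightarrow> 'a list" where
  "cyc_window u i k = map (\<lambda>j. u ! ((i + j) mod length u)) [0..<k]"

definition de_bruijn :: "'a set \<Rightarrow> nat \<Rightarrow> 'a list \<Rightarrow> bool" where
  "de_bruijn S k u \<longleftrightarrow> set u \<subseteq> S \<and> length u = card S ^ k \<and>
     (\<forall>x. length x = k \<and> set x \<subseteq> S \<longrightarrow> (\<exists>!i. i < length u \<and> cyc_window u i k = x))"

definition bwt :: "'a::linorder list \<Rightarrow> 'a list" where
  "bwt v = map last (sort (map (\<lambda>i. rotate i v) [0..<length v]))"

definition runs :: "'a list \<Rightarrow> nat" where
  "runs xs = length (remdups_adj xs)"

text \<open>Append the end-marker: letters become Some a, the marker is None < Some a.\<close>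
definition with_end :: "'a list \<Rightarrow> 'a option list" where
  "with_end w = map Some w @ [None]"

end

theory Submission
  imports Defs
begin

definition cs :: "'b list \<Rightarrow> nat set" where
  "cs xs = {i. Suc i < length xs \<and> xs ! i \<noteq> xs ! Suc i}"

lemma cs_finite: "finite (cs xs)"
  unfolding cs_def by (rule finite_subset[of _ "{..<length xs}"]) auto

lemma runs_cs: "xs \<noteq> [] \<Longrightarrow> runs xs = card (cs xs) + 1"
proof (induction xs)
  case Nil thus ?case by simp
next
  case (Cons x ys)
  show ?case
  proof (cases ys)
    case Nil
    thus ?thesis by (simp add: runs_def cs_def)
  next
    case (Cons y zs)
    have IH: "runs ys = card (cs ys) + 1" using Cons.IH Cons by simp
    have eq: "cs (x # ys) = (if x = y then {} else {0}) \<union> Suc ` cs ys"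
    proof (rule set_eqI)
      fix i show "i \<in> cs (x # ys) \<longleftrightarrow> i \<in> (if x = y then {} else {0}) \<union> Suc ` cs ys"
        by (cases i) (auto simp: cs_def Cons)
    qed
    have "0 \<notin> Suc ` cs ys" by auto
    hence c: "card (cs (x # ys)) = (if x = y then 0 else 1) + card (cs ys)"
      unfolding eq using cs_finite[of ys] by (auto simp: card_image)
    have r: "runs (x # ys) = (if x = y then 0 else 1) + runs ys"
      using Cons by (simp add: runs_def)
    show ?thesis using r c IH by simp
  qed
qed

lemma card_le_runs: "card (set xs) \<le> runs xs"
  unfolding runs_def by (metis card_length remdups_adj_set)

lemma grouped_cs:
  assumes ne: "xs \<noteq> []"
    and g: "\<And>p q r. p < q \<Longrightarrow> q < r \<Longrightarrow> r < length xs \<Longrightarrow> xs ! p = xs ! r \<Longrightarrow> xs ! q = xs ! p"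
  shows "card (cs xs) + 1 \<le> card (set xs)"
proof -
  let ?n = "length xs"
  have key: "xs ! i \<noteq> xs ! j" if "i \<in> cs xs" "i < j" "j < ?n" for i j
  proof
    assume e: "xs ! i = xs ! j"
    from that(1) have ci: "Suc i < ?n" "xs ! i \<noteq> xs ! Suc i" by (auto simp: cs_def)
    show False
    proof (cases "Suc i = j")
      case True thus False using e ci by simp
    next
      case False
      hence "Suc i < j" using that by simp
      from g[OF _ this that(3) e] ci show False by simp
    qed
  qed
  have inj: "inj_on (nth xs) (cs xs)"
  proof (rule inj_onI)
    fix i j assume a: "i \<in> cs xs" "j \<in> cs xs" "xs ! i = xs ! j"
    have jn: "j < ?n" "i < ?n" using a by (auto simp: cs_def)
    show "i = j"
    proof (rule ccontr)
      assume "i \<noteq> j"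
      hence "i < j \<or> j < i" by arith
      thus False using key a jn by (metis)
    qed
  qed
  have sub: "nth xs ` cs xs \<subseteq> set xs - {xs ! (?n - 1)}"
  proof
    fix y assume "y \<in> nth xs ` cs xs"
    then obtain i where i: "i \<in> cs xs" "y = xs ! i" by auto
    hence "Suc i < ?n" by (auto simp: cs_def)
    hence "i < ?n - 1" "?n - 1 < ?n" by auto
    with key[OF i(1)] i show "y \<in> set xs - {xs ! (?n - 1)}" by auto
  qed
  have "card (cs xs) = card (nth xs ` cs xs)" using inj by (simp add: card_image)
  also have "\<dots> \<le> card (set xs - {xs ! (?n - 1)})" by (rule card_mono[OF _ sub]) simp
  also have "\<dots> = card (set xs) - 1" using ne by (simp add: card_Diff_singleton)
  finally have "card (cs xs) \<le> card (set xs) - 1" .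
  moreover have "card (set xs) \<ge> 1" using ne by (simp add: Suc_leI card_gt_0_iff)
  ultimately show ?thesis by linarith
qed

lemma cs_pair: "cs (map (\<lambda>r. (f r, g r)) L) \<subseteq> cs (map f L) \<union> cs (map g L)"
  unfolding cs_def by auto

lemma take_le_self: "take i ys \<le> (ys::'b::linorder list)"
proof (cases "i < length ys")
  case True
  hence "(take i ys, ys) \<in> lexord {(u, v). u < v}"
    by (simp add: lexord_take_index_conv min_def)
  thus ?thesis by (simp add: list_le_def list_less_def)
qed simp

lemma take_mono_lex:
  assumes "(a::'b::linorder list) \<le> b" shows "take n a \<le> take n b"
proof (cases "a = b")
  case False
  hence "(a, b) \<in> lexord {(u, v). u < v}" using assms by (simp add: list_le_def list_less_def)
  hence "(length a < length b \<and> take (length a) b = a) \<or>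
     (\<exists>i. i < min (length a) (length b) \<and> take i a = take i b \<and> a ! i < b ! i)"
    by (simp add: lexord_take_index_conv)
  thus ?thesis
  proof
    assume h: "length a < length b \<and> take (length a) b = a"
    have "take n a = take n (take (length a) b)" using h by simp
    also have "\<dots> = take (min n (length a)) (take n b)" by (simp add: min_def)
    finally have e: "take n a = take (min n (length a)) (take n b)" .
    show ?thesis unfolding e by (rule take_le_self)
  next
    assume "\<exists>i. i < min (length a) (length b) \<and> take i a = take i b \<and> a ! i < b ! i"
    then obtain i where i: "i < min (length a) (length b)" "take i a = take i b" "a ! i < b ! i" by blast
    show ?thesis
    proof (cases "i < n")
      case True
      have m1: "i < min (length (take n a)) (length (take n b))" using i True by simp
      have m2: "take i (take n a) = take i (take n b)" using i(2) True by (simp add: min.absorb1)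
      have m3: "take n a ! i < take n b ! i" using i(3) True by simp
      have "(take n a, take n b) \<in> lexord {(u, v). u < v}"
        unfolding lexord_take_index_conv using m1 m2 m3 by blast
      thus ?thesis by (simp add: list_le_def list_less_def)
    next
      case False
      hence "min n i = n" by simp
      hence "take n a = take n (take i a)" "take n b = take n (take i b)" by (simp_all only: take_take)
      thus ?thesis using i by simp
    qed
  qed
qed simp

lemma count_lemma:
  assumes fin: "finite P" and A: "A \<subseteq> fst ` P" and s1: "1 \<le> s"
    and s: "\<And>a. a \<in> A \<Longrightarrow> s \<le> card {c. (a, c) \<in> P}"
  shows "card (fst ` P) + card A * (s - 1) \<le> card P"
proof -
  let ?F = "fst ` P" and ?h = "\<lambda>a. card {c. (a, c) \<in> P}"
  have finF: "finite ?F" using fin by simp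
  have finB: "finite {c. (a, c) \<in> P}" for a
    using finite_imageI[OF fin, of snd] by (rule finite_subset[rotated]) force
  have PS: "P = (SIGMA a:?F. {c. (a, c) \<in> P})" by force
  have cP: "card P = (\<Sum>a\<in>?F. ?h a)"
    by (subst PS) (simp add: finF finB)
  have h1: "1 \<le> ?h a" if "a \<in> ?F" for a
  proof -
    from that obtain c where "(a, c) \<in> P" by force
    hence "{c. (a, c) \<in> P} \<noteq> {}" by auto
    thus ?thesis using finB[of a] by (simp add: Suc_leI card_gt_0_iff)
  qed
  have finA: "finite A" using A finF finite_subset by blast
  have e1: "(\<Sum>a\<in>?F. ?h a) = (\<Sum>a\<in>?F - A. ?h a) + (\<Sum>a\<in>A. ?h a)"
    using A finF by (metis sum.subset_diff)
  have e2: "(\<Sum>a\<in>?F - A. ?h a) \<ge> card (?F - A)"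
    using h1 sum_mono[of "?F - A" "\<lambda>_. 1::nat" ?h] by simp
  have e3: "(\<Sum>a\<in>A. ?h a) \<ge> card A * s"
    using s sum_mono[of A "\<lambda>_. s" ?h] by (simp add: mult.commute)
  have e4: "card (?F - A) = card ?F - card A" using A finA by (simp add: card_Diff_subset)
  have e5: "card A \<le> card ?F" using A finF card_mono by blast
  have e6: "card A * s = card A * (s - 1) + card A" using s1
    by (cases s) auto
  show ?thesis using cP e1 e2 e3 e4 e5 e6 by linarith
qed

lemma exist_rot:
  assumes lenU: "length U = m" and km: "k - 1 \<le> m" and m0: "0 < m" and k1: "1 \<le> k"
    and win: "\<And>t. t < k \<Longrightarrow> U ! ((i + t) mod m) = (c # x) ! t" and im: "i < m"
    and lenx: "length x = k - 1"
  shows "take (k-1) (rotate (Suc i) (with_end (U @ take (k-1) U))) = map Some x \<and>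
         last (rotate (Suc i) (with_end (U @ take (k-1) U))) = Some c"
proof -
  define w where "w = U @ take (k-1) U"
  define v where "v = with_end w"
  have lw: "length w = m + (k-1)" using lenU km by (simp add: w_def min_def)
  have lv: "length v = m + k" using lw k1 by (simp add: v_def with_end_def)
  have wq: "w ! q = U ! (q mod m)" if "q < m + (k-1)" for q
  proof (cases "q < m")
    case True thus ?thesis using lenU by (simp add: w_def nth_append)
  next
    case False
    hence a: "q - m < k - 1" using that by simp
    have "q mod m = (q - m) mod m" using False by (simp add: le_mod_geq)
    also have "\<dots> = q - m" using a km by simp
    finally show ?thesis using lenU False a by (simp add: w_def nth_append)
  qed
  have vq: "v ! q = Some (w ! q)" if "q < m + (k-1)" for q
    using that lw by (simp add: v_def with_end_def nth_append)
  have tk: "take (k-1) (rotate (Suc i) v) = map Some x"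
  proof (rule nth_equalityI)
    show "length (take (k-1) (rotate (Suc i) v)) = length (map Some x)" using lv lenx by simp
    fix t assume "t < length (take (k-1) (rotate (Suc i) v))"
    hence t: "t < k - 1" using lv by simp
    have "take (k-1) (rotate (Suc i) v) ! t = rotate (Suc i) v ! t" using t by simp
    also have "\<dots> = v ! ((Suc i + t) mod length v)" by (rule nth_rotate) (use t lv in simp)
    also have "(Suc i + t) mod length v = Suc i + t" using t im lv by simp
    also have "v ! (Suc i + t) = Some (w ! (Suc i + t))" using t im by (intro vq) simp
    also have "w ! (Suc i + t) = U ! ((i + Suc t) mod m)" using t im by (subst wq) simp_all
    also have "U ! ((i + Suc t) mod m) = x ! t" using win[of "Suc t"] t by simp
    finally show "take (k-1) (rotate (Suc i) v) ! t = map Some x ! t" using t lenx by simp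
  qed
  have ne: "rotate (Suc i) v \<noteq> []" using lv k1 by (metis length_rotate list.size(3) add_is_0 not_one_le_zero)
  have "last (rotate (Suc i) v) = rotate (Suc i) v ! (m + k - 1)"
    using ne lv by (simp add: last_conv_nth)
  also have "\<dots> = v ! ((Suc i + (m + k - 1)) mod length v)" by (rule nth_rotate) (use lv k1 in simp)
  also have "(Suc i + (m + k - 1)) mod length v = i" using k1 im lv by (simp add: mod_if)
  also have "v ! i = Some (w ! i)" using im by (intro vq) simp
  also have "w ! i = U ! ((i + 0) mod m)" using im by (subst wq) simp_all
  also have "\<dots> = c" using win[of 0] k1 by simp
  finally show ?thesis using tk by (simp add: v_def w_def)
qed

lemma win_rot:
  assumes lD: "length D = m" and m0: "0 < m" and cw: "cyc_window D i0 k = c # x"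
  shows "\<exists>i<m. \<forall>t<k. rotate j D ! ((i + t) mod m) = (c # x) ! t"
proof (intro exI conjI allI impI)
  define i where "i = (i0 + m - j mod m) mod m"
  show "i < m" using m0 by (simp add: i_def)
  fix t assume t: "t < k"
  have "rotate j D ! ((i + t) mod m) = D ! ((j + (i + t) mod m) mod m)"
    using lD m0 by (simp add: nth_rotate)
  also have "(j + (i + t) mod m) mod m = (j + t + i) mod m" by (simp add: mod_add_right_eq add_ac)
  also have "\<dots> = (j + t + (i0 + m - j mod m)) mod m" unfolding i_def by (simp add: mod_add_right_eq)
  also have "j + t + (i0 + m - j mod m) = (i0 + t) + (m + m * (j div m))"
  proof -
    have "m * (j div m) + j mod m = j" by (rule mult_div_mod_eq)
    moreover have "j mod m < m" using m0 by simp
    ultimately show ?thesis by linarith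
  qed
  also have "((i0 + t) + (m + m * (j div m))) mod m = (i0 + t) mod m"
    by (metis mod_mult_self2 mult_Suc_right add.commute)
  also have "D ! ((i0 + t) mod m) = cyc_window D i0 k ! t" using t lD by (simp add: cyc_window_def)
  finally show "rotate j D ! ((i + t) mod m) = (c # x) ! t" using cw by simp
qed

theorem lemma6:
  fixes S :: "'a::linorder set" and \<sigma> k j :: nat and D U :: "'a list"
  assumes "finite S" and "card S = \<sigma>" and "\<sigma> \<ge> 2" and "k \<ge> 1"
    and "de_bruijn S k D" and "U = rotate j D"
  shows "runs (bwt (with_end (U @ take (k - 1) U))) \<ge> \<sigma> ^ (k - 1) * (\<sigma> - 1) + 1"
proof -
  note finS = assms(1) and cS = assms(2) and s2 = assms(3) and k1 = assms(4)
    and db = assms(5) and UD = assms(6)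
  define m where "m = \<sigma> ^ k"
  have lD: "length D = m" using db cS by (simp add: de_bruijn_def m_def)
  have lU: "length U = m" using lD UD by simp
  have "k < 2 ^ k" by simp
  also have "(2::nat) ^ k \<le> \<sigma> ^ k" using s2 by (simp add: power_mono)
  finally have km: "k - 1 \<le> m" "0 < m" unfolding m_def using s2 by auto
  define v where "v = with_end (U @ take (k - 1) U)"
  have lv: "length v = m + k" using lU km k1 by (simp add: v_def with_end_def min_def)
  define N where "N = m + k"
  define L where "L = sort (map (\<lambda>i. rotate i v) [0..<N])"
  have bw: "bwt v = map last L" by (simp add: bwt_def L_def lv N_def)
  have lL: "length L = N" by (simp add: L_def)
  have LN: "L \<noteq> []" using lL k1 by (auto simp: N_def)
  have setL: "set L = (\<lambda>i. rotate i v) ` {0..<N}" by (simp add: L_def)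
  define f where "f = (\<lambda>r::'a option list. take (k - 1) r)"
  define P where "P = set (map (\<lambda>r. (f r, last r)) L)"
  have r1: "runs (bwt v) = card (cs (map last L)) + 1" unfolding bw by (rule runs_cs) (use LN in simp)
  have r2: "card (cs (map (\<lambda>r. (f r, last r)) L)) \<le> card (cs (map f L)) + card (cs (map last L))"
    by (rule order_trans[OF card_mono[OF _ cs_pair] card_Un_le]) (simp add: cs_finite)
  have r3: "card P \<le> card (cs (map (\<lambda>r. (f r, last r)) L)) + 1"
    using card_le_runs[of "map (\<lambda>r. (f r, last r)) L"] runs_cs[of "map (\<lambda>r. (f r, last r)) L"] LN
    by (simp add: P_def)
  have r4: "card (cs (map f L)) + 1 \<le> card (set (map f L))"
  proof (rule grouped_cs)
    show "map f L \<noteq> []" using LN by simp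
    fix p q r assume pq: "p < q" "q < r" "r < length (map f L)" and e: "map f L ! p = map f L ! r"
    have so: "sorted L" by (simp add: L_def)
    have "L ! p \<le> L ! q" "L ! q \<le> L ! r" using pq so by (simp_all add: sorted_nth_mono)
    hence "f (L ! p) \<le> f (L ! q)" "f (L ! q) \<le> f (L ! r)" unfolding f_def by (simp_all add: take_mono_lex)
    thus "map f L ! q = map f L ! p" using e pq by simp
  qed
  have sF: "set (map f L) = fst ` P" by (simp add: P_def image_image)
  define A where "A = map Some ` {x. set x \<subseteq> S \<and> length x = k - 1}"
  have cA: "card A = \<sigma> ^ (k - 1)"
    unfolding A_def using finS cS
    by (subst card_image) (simp_all add: card_lists_length_eq inj_on_def)
  have mem: "(map Some x, Some c) \<in> P" if x: "set x \<subseteq> S" "length x = k - 1" and c: "c \<in> S" for x c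
  proof -
    have "length (c # x) = k \<and> set (c # x) \<subseteq> S" using x c k1 by auto
    with db obtain i0 where "i0 < length D" "cyc_window D i0 k = c # x"
      unfolding de_bruijn_def by blast
    from win_rot[OF lD km(2) this(2), of j] obtain i where
      i: "i < m" "\<forall>t<k. U ! ((i + t) mod m) = (c # x) ! t" using UD by blast
    have ex: "take (k-1) (rotate (Suc i) v) = map Some x \<and> last (rotate (Suc i) v) = Some c"
      unfolding v_def by (rule exist_rot[OF lU km(1) km(2) k1 _ i(1) x(2)]) (use i in blast)
    have "rotate (Suc i) v \<in> set L" unfolding setL
      by (rule image_eqI[of _ _ "Suc i"]) (use i k1 in \<open>simp_all add: N_def\<close>)
    hence "(f (rotate (Suc i) v), last (rotate (Suc i) v)) \<in> P" by (auto simp: P_def)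
    thus ?thesis using ex by (simp add: f_def)
  qed
  have sig: "\<sigma> \<le> card {c. (a, c) \<in> P}" if "a \<in> A" for a
  proof -
    from that obtain x where x: "set x \<subseteq> S" "length x = k - 1" "a = map Some x" by (auto simp: A_def)
    have "Some ` S \<subseteq> {c. (a, c) \<in> P}" using mem x by auto
    moreover have "finite {c. (a, c) \<in> P}"
      by (rule finite_subset[of _ "snd ` P"]) (force, simp add: P_def)
    ultimately have "card (Some ` S) \<le> card {c. (a, c) \<in> P}" by (rule card_mono[rotated])
    thus ?thesis using cS by (simp add: card_image)
  qed
  have AP: "A \<subseteq> fst ` P"
  proof
    fix a assume "a \<in> A"
    then obtain x where x: "set x \<subseteq> S" "length x = k - 1" "a = map Some x" by (auto simp: A_def)
    have "S \<noteq> {}" using cS s2 by auto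
    then obtain c where "c \<in> S" by blast
    from mem[OF x(1,2) this] x(3) show "a \<in> fst ` P" by force
  qed
  have r5: "card (fst ` P) + card A * (\<sigma> - 1) \<le> card P"
    by (rule count_lemma[OF _ AP _ sig]) (use s2 in \<open>simp_all add: P_def\<close>)
  have r6: "card (fst ` P) + \<sigma> ^ (k - 1) * (\<sigma> - 1) \<le> card P" using r5 cA by simp
  have r7: "card (cs (map f L)) + 1 \<le> card (fst ` P)" using r4 sF by simp
  show ?thesis using r1 r2 r3 r6 r7 unfolding v_def[symmetric] by linarith
qed
end
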